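(* Let $Y$ be a complete geodesic CAT(0) space. For every finite weighted graph $(C,m)$, $\lambda^{Gro}(C,Y)\le\lambda(C,Y)$, with equality when $Y$ is Euclidean.
   Context: For a finite graph $C$ a weight is a positive function $m$ on edges, vertices and $\emptyset$ with $m(c)=\sum_{e\ni c}m(e)$ and $m(\emptyset)=\sum_c m(c)$. For $g:C^0\to Y$: $E(g)=\sum_{\text{edges }e}m(e)d(g(\mathrm{ori}\,e),g(\mathrm{ext}\,e))^2$; $\mathrm{bar}(g)$ is the unique minimizer of $y\mapsto\sum_c m(c)d(g(c),y)^2$; $RQ(g)=E(g)/\sum_c m(c)d(g(c),\mathrm{bar}(g))^2$ and $\lambda(C,Y)=\inf RQ(g)$ over non-constant $g$. Gromov's version: $F(g)=\frac{1}{2m(\emptyset)}\sum_{c,c'}m(c)m(c')d(g(c),g(c'))^2$ (sum over ordered pairs of vertices), $RQ^{Gro}(g)=E(g)/F(g)$, and $\lambda^{Gro}(C,Y)=\inf RQ^{Gro}(g)$ over non-constant $g$. *)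

theory Defs
  imports "HOL-Analysis.Analysis"
begin

definition geodesic_seg :: "'y::metric_space set \<Rightarrow> (real \<Rightarrow> 'y) \<Rightarrow> 'y \<Rightarrow> 'y \<Rightarrow> bool" where
  "geodesic_seg Y \<gamma> x y \<longleftrightarrow>
     \<gamma> 0 = x \<and> \<gamma> (dist x y) = y \<and> \<gamma> ` {0..dist x y} \<subseteq> Y \<and>
     (\<forall>s\<in>{0..dist x y}. \<forall>t\<in>{0..dist x y}. dist (\<gamma> s) (\<gamma> t) = \<bar>s - t\<bar>)"

definition geodesic_space :: "'y::metric_space set \<Rightarrow> bool" where
  "geodesic_space Y \<longleftrightarrow> (\<forall>x\<in>Y. \<forall>y\<in>Y. \<exists>\<gamma>. geodesic_seg Y \<gamma> x y)"

text \<open>Pairs (point on the side [x,y] of a geodesic triangle, corresponding point on the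
  side [a,b] of the Euclidean comparison triangle in the plane).\<close>
definition side_pairs :: "(real \<Rightarrow> 'y::metric_space) \<Rightarrow> 'y \<Rightarrow> 'y \<Rightarrow> (real^2) \<Rightarrow> (real^2) \<Rightarrow> ('y \<times> (real^2)) set" where
  "side_pairs \<gamma> x y a b = {(\<gamma> t, a + (t / dist x y) *\<^sub>R (b - a)) | t. t \<in> {0..dist x y}}"

definition CAT0 :: "'y::metric_space set \<Rightarrow> bool" where
  "CAT0 Y \<longleftrightarrow>
    (\<forall>x1 x2 x3 \<gamma>12 \<gamma>23 \<gamma>31 (a1::real^2) a2 a3.
       x1 \<in> Y \<and> x2 \<in> Y \<and> x3 \<in> Y \<and>
       geodesic_seg Y \<gamma>12 x1 x2 \<and> geodesic_seg Y \<gamma>23 x2 x3 \<and> geodesic_seg Y \<gamma>31 x3 x1 \<and>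
       dist a1 a2 = dist x1 x2 \<and> dist a2 a3 = dist x2 x3 \<and> dist a3 a1 = dist x3 x1 \<longrightarrow>
       (let S = side_pairs \<gamma>12 x1 x2 a1 a2 \<union> side_pairs \<gamma>23 x2 x3 a2 a3 \<union> side_pairs \<gamma>31 x3 x1 a3 a1
        in \<forall>p\<in>S. \<forall>q\<in>S. dist (fst p) (fst q) \<le> dist (snd p) (snd q)))"

definition complete_geodesic_CAT0 :: "'y::metric_space set \<Rightarrow> bool" where
  "complete_geodesic_CAT0 Y \<longleftrightarrow> Y \<noteq> {} \<and> complete Y \<and> geodesic_space Y \<and> CAT0 Y"

definition vweight :: "'e set \<Rightarrow> ('e \<Rightarrow> 'v) \<Rightarrow> ('e \<Rightarrow> 'v) \<Rightarrow> ('e \<Rightarrow> real) \<Rightarrow> 'v \<Rightarrow> real" where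
  "vweight Ed ori ext mE c = (\<Sum>e\<in>{e\<in>Ed. ori e = c \<or> ext e = c}. mE e)"

definition tweight :: "'v set \<Rightarrow> 'e set \<Rightarrow> ('e \<Rightarrow> 'v) \<Rightarrow> ('e \<Rightarrow> 'v) \<Rightarrow> ('e \<Rightarrow> real) \<Rightarrow> real" where
  "tweight V Ed ori ext mE = (\<Sum>c\<in>V. vweight Ed ori ext mE c)"

definition weighted_graph :: "'v set \<Rightarrow> 'e set \<Rightarrow> ('e \<Rightarrow> 'v) \<Rightarrow> ('e \<Rightarrow> 'v) \<Rightarrow> ('e \<Rightarrow> real) \<Rightarrow> bool" where
  "weighted_graph V Ed ori ext mE \<longleftrightarrow>
     finite V \<and> finite Ed \<and> V \<noteq> {} \<and>
     (\<forall>e\<in>Ed. ori e \<in> V \<and> ext e \<in> V) \<and>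
     (\<forall>e\<in>Ed. mE e > 0) \<and>
     (\<forall>c\<in>V. vweight Ed ori ext mE c > 0)"

definition energy :: "'e set \<Rightarrow> ('e \<Rightarrow> 'v) \<Rightarrow> ('e \<Rightarrow> 'v) \<Rightarrow> ('e \<Rightarrow> real) \<Rightarrow> ('v \<Rightarrow> 'y::metric_space) \<Rightarrow> real" where
  "energy Ed ori ext mE g = (\<Sum>e\<in>Ed. mE e * (dist (g (ori e)) (g (ext e)))\<^sup>2)"

definition bar :: "'y::metric_space set \<Rightarrow> 'v set \<Rightarrow> 'e set \<Rightarrow> ('e \<Rightarrow> 'v) \<Rightarrow> ('e \<Rightarrow> 'v) \<Rightarrow> ('e \<Rightarrow> real) \<Rightarrow> ('v \<Rightarrow> 'y) \<Rightarrow> 'y" where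
  "bar Y V Ed ori ext mE g =
     (THE y. y \<in> Y \<and> (\<forall>z\<in>Y.
        (\<Sum>c\<in>V. vweight Ed ori ext mE c * (dist (g c) y)\<^sup>2)
          \<le> (\<Sum>c\<in>V. vweight Ed ori ext mE c * (dist (g c) z)\<^sup>2)))"

definition RQ :: "'y::metric_space set \<Rightarrow> 'v set \<Rightarrow> 'e set \<Rightarrow> ('e \<Rightarrow> 'v) \<Rightarrow> ('e \<Rightarrow> 'v) \<Rightarrow> ('e \<Rightarrow> real) \<Rightarrow> ('v \<Rightarrow> 'y) \<Rightarrow> real" where
  "RQ Y V Ed ori ext mE g = energy Ed ori ext mE g /
     (\<Sum>c\<in>V. vweight Ed ori ext mE c * (dist (g c) (bar Y V Ed ori ext mE g))\<^sup>2)"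

definition Fgro :: "'v set \<Rightarrow> 'e set \<Rightarrow> ('e \<Rightarrow> 'v) \<Rightarrow> ('e \<Rightarrow> 'v) \<Rightarrow> ('e \<Rightarrow> real) \<Rightarrow> ('v \<Rightarrow> 'y::metric_space) \<Rightarrow> real" where
  "Fgro V Ed ori ext mE g = 1 / (2 * tweight V Ed ori ext mE) *
     (\<Sum>c\<in>V. \<Sum>c'\<in>V. vweight Ed ori ext mE c * vweight Ed ori ext mE c' * (dist (g c) (g c'))\<^sup>2)"

definition RQgro :: "'v set \<Rightarrow> 'e set \<Rightarrow> ('e \<Rightarrow> 'v) \<Rightarrow> ('e \<Rightarrow> 'v) \<Rightarrow> ('e \<Rightarrow> real) \<Rightarrow> ('v \<Rightarrow> 'y::metric_space) \<Rightarrow> real" where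
  "RQgro V Ed ori ext mE g = energy Ed ori ext mE g / Fgro V Ed ori ext mE g"

definition nonconst_map :: "'y set \<Rightarrow> 'v set \<Rightarrow> ('v \<Rightarrow> 'y) \<Rightarrow> bool" where
  "nonconst_map Y V g \<longleftrightarrow> g ` V \<subseteq> Y \<and> (\<exists>c\<in>V. \<exists>c'\<in>V. g c \<noteq> g c')"

definition lambda_spec :: "'v set \<Rightarrow> 'e set \<Rightarrow> ('e \<Rightarrow> 'v) \<Rightarrow> ('e \<Rightarrow> 'v) \<Rightarrow> ('e \<Rightarrow> real) \<Rightarrow> 'y::metric_space set \<Rightarrow> real" where
  "lambda_spec V Ed ori ext mE Y = Inf {RQ Y V Ed ori ext mE g | g. nonconst_map Y V g}"

definition lambda_gro :: "'v set \<Rightarrow> 'e set \<Rightarrow> ('e \<Rightarrow> 'v) \<Rightarrow> ('e \<Rightarrow> 'v) \<Rightarrow> ('e \<Rightarrow> real) \<Rightarrow> 'y::metric_space set \<Rightarrow> real" where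
  "lambda_gro V Ed ori ext mE Y = Inf {RQgro V Ed ori ext mE g | g. nonconst_map Y V g}"

end

theory Submission
  imports Defs
begin

lemma eucl_id:
  fixes a1 a2 a3 :: "'a::real_inner"
  shows "(dist (a1 + t *\<^sub>R (a2 - a1)) a3)\<^sup>2 = (1-t)*(dist a3 a1)\<^sup>2 + t*(dist a3 a2)\<^sup>2 - t*(1-t)*(dist a1 a2)\<^sup>2"
  by (simp add: dist_norm power2_norm_eq_inner inner_diff_left inner_diff_right inner_add_left inner_add_right inner_commute algebra_simps)

lemma dist2: "dist (a::real^2) b = sqrt ((a$1 - b$1)\<^sup>2 + (a$2 - b$2)\<^sup>2)"
  by (simp add: dist_vec_def L2_set_def sum_2 dist_real_def)

lemma comp_tri:
  assumes "p \<ge> 0" "q \<ge> 0" "r \<ge> 0" "q \<le> p + r" "p \<le> q + r" "r \<le> p + q"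
  shows "\<exists>a1 a2 a3::real^2. dist a1 a2 = p \<and> dist a2 a3 = q \<and> dist a3 a1 = r"
proof (cases "p = 0")
  case True
  then have "q = r" using assms by linarith
  then show ?thesis using True assms
    by (intro exI[of _ "vector [0,0]"] exI[of _ "vector [r,0]"]) (simp add: dist2)
next
  case False
  define u where "u = (r\<^sup>2 + p\<^sup>2 - q\<^sup>2) / (2*p)"
  have pp: "p > 0" using False assms by simp
  have "\<bar>r - p\<bar> \<le> q" using assms by (simp add: abs_le_iff)
  hence "(r - p)\<^sup>2 \<le> q\<^sup>2" using abs_le_square_iff[of "r-p" q] assms(2) by simp
  moreover have "q\<^sup>2 \<le> (r + p)\<^sup>2" using assms by (simp add: power_mono)
  ultimately have "\<bar>r\<^sup>2 + p\<^sup>2 - q\<^sup>2\<bar> \<le> 2*p*r" by (simp add: power2_eq_square algebra_simps abs_le_iff)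
  hence "\<bar>u\<bar> \<le> r" using pp by (simp add: u_def abs_divide field_simps)
  hence u2: "u\<^sup>2 \<le> r\<^sup>2" by (metis abs_le_square_iff abs_of_nonneg assms(3))
  define v where "v = sqrt (r\<^sup>2 - u\<^sup>2)"
  have v2: "v\<^sup>2 = r\<^sup>2 - u\<^sup>2" using u2 by (simp add: v_def)
  have e1: "dist (vector [0,0] :: real^2) (vector [p,0]) = p" using pp by (simp add: dist2)
  have e3: "dist (vector [u,v] :: real^2) (vector [0,0]) = r" using v2 assms
    by (simp add: dist2 real_sqrt_unique)
  have "(p - u)\<^sup>2 + v\<^sup>2 = q\<^sup>2" using v2 pp by (simp add: u_def power2_eq_square field_simps)
  hence e2: "dist (vector [p,0] :: real^2) (vector [u,v]) = q" using assms
    by (simp add: dist2 real_sqrt_unique)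
  show ?thesis using e1 e2 e3 by blast
qed

lemma CAT0D:
  assumes "CAT0 Y" "x1 \<in> Y" "x2 \<in> Y" "x3 \<in> Y"
    "geodesic_seg Y g12 x1 x2" "geodesic_seg Y g23 x2 x3" "geodesic_seg Y g31 x3 x1"
    "dist (a1::real^2) a2 = dist x1 x2" "dist a2 a3 = dist x2 x3" "dist a3 a1 = dist x3 x1"
    "p \<in> side_pairs g12 x1 x2 a1 a2 \<union> side_pairs g23 x2 x3 a2 a3 \<union> side_pairs g31 x3 x1 a3 a1"
    "q \<in> side_pairs g12 x1 x2 a1 a2 \<union> side_pairs g23 x2 x3 a2 a3 \<union> side_pairs g31 x3 x1 a3 a1"
  shows "dist (fst p) (fst q) \<le> dist (snd p) (snd q)"
proof -
  have "let S = side_pairs g12 x1 x2 a1 a2 \<union> side_pairs g23 x2 x3 a2 a3 \<union> side_pairs g31 x3 x1 a3 a1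
        in \<forall>p\<in>S. \<forall>q\<in>S. dist (fst p) (fst q) \<le> dist (snd p) (snd q)"
    using assms(1) unfolding CAT0_def using assms(2-10) by blast
  then show ?thesis using assms(11,12) unfolding Let_def by blast
qed

lemma cat0_convex:
  assumes cat: "CAT0 Y" and geo: "geodesic_space Y" and xY: "x \<in> Y" and bY: "b \<in> Y" and zY: "z \<in> Y"
    and gam: "geodesic_seg Y \<gamma> b z" and t0: "0 \<le> t" and t1: "t \<le> 1"
  shows "(dist x (\<gamma> (t * dist b z)))\<^sup>2 \<le> (1-t)*(dist x b)\<^sup>2 + t*(dist x z)\<^sup>2 - t*(1-t)*(dist b z)\<^sup>2"
proof -
  obtain g23 where g23: "geodesic_seg Y g23 z x" using geo zY xY unfolding geodesic_space_def by blast
  obtain g31 where g31: "geodesic_seg Y g31 x b" using geo bY xY unfolding geodesic_space_def by blast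
  obtain a1 a2 a3 :: "real^2" where a: "dist a1 a2 = dist b z" "dist a2 a3 = dist z x" "dist a3 a1 = dist x b"
    using comp_tri[of "dist b z" "dist z x" "dist x b"]
    by (metis dist_commute dist_triangle zero_le_dist)
  define d where "d = dist b z"
  define s where "s = t * d"
  have d0: "d \<ge> 0" by (simp add: d_def)
  have s_in: "s \<in> {0..d}" using t0 t1 d0 mult_left_le_one_le[of d t] by (simp add: s_def)
  have p: "(\<gamma> s, a1 + (s / dist b z) *\<^sub>R (a2 - a1)) \<in> side_pairs \<gamma> b z a1 a2"
    unfolding side_pairs_def using s_in d_def by blast
  have "(g31 0, a3 + (0 / dist x b) *\<^sub>R (a1 - a3)) \<in> side_pairs g31 x b a3 a1"
    unfolding side_pairs_def by force
  moreover have "g31 0 = x" using g31 unfolding geodesic_seg_def by blast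
  ultimately have q: "(x, a3) \<in> side_pairs g31 x b a3 a1" by simp
  have ineq: "dist (\<gamma> s) x \<le> dist (a1 + (s / dist b z) *\<^sub>R (a2 - a1)) a3"
    using CAT0D[OF cat bY zY xY gam g23 g31 a, of "(\<gamma> s, a1 + (s / dist b z) *\<^sub>R (a2 - a1))" "(x, a3)"] p q
    by auto
  have pt: "a1 + (s / dist b z) *\<^sub>R (a2 - a1) = a1 + t *\<^sub>R (a2 - a1)"
  proof (cases "d = 0")
    case True
    then have "a1 = a2" using a(1) d_def by simp
    then show ?thesis by simp
  next
    case False
    then show ?thesis by (simp add: s_def d_def)
  qed
  have "(dist x (\<gamma> s))\<^sup>2 \<le> (dist (a1 + t *\<^sub>R (a2 - a1)) a3)\<^sup>2"
    using ineq pt by (simp add: dist_commute power_mono)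
  also have "\<dots> = (1-t)*(dist a3 a1)\<^sup>2 + t*(dist a3 a2)\<^sup>2 - t*(1-t)*(dist a1 a2)\<^sup>2"
    by (rule eucl_id)
  also have "\<dots> = (1-t)*(dist x b)\<^sup>2 + t*(dist x z)\<^sup>2 - t*(1-t)*(dist b z)\<^sup>2"
    using a by (simp add: dist_commute)
  finally show ?thesis by (simp add: s_def d_def)
qed

lemma geo_in:
  assumes "geodesic_seg Y \<gamma> b z" "0 \<le> t" "t \<le> 1"
  shows "\<gamma> (t * dist b z) \<in> Y"
proof -
  have "t * dist b z \<in> {0..dist b z}" using assms(2,3) by (simp add: mult_left_le_one_le)
  then show ?thesis using assms(1) unfolding geodesic_seg_def by blast
qed

definition fsum :: "'v set \<Rightarrow> ('v \<Rightarrow> real) \<Rightarrow> ('v \<Rightarrow> 'y::metric_space) \<Rightarrow> 'y \<Rightarrow> real" where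
  "fsum V w g z = (\<Sum>c\<in>V. w c * (dist (g c) z)\<^sup>2)"

lemma fsum_nonneg: "(\<And>c. c \<in> V \<Longrightarrow> w c \<ge> 0) \<Longrightarrow> fsum V w g z \<ge> 0"
  unfolding fsum_def by (intro sum_nonneg) auto

lemma fsum_convex:
  assumes cat: "CAT0 Y" and geo: "geodesic_space Y" and gY: "g ` V \<subseteq> Y"
    and w: "\<And>c. c \<in> V \<Longrightarrow> w c \<ge> 0"
    and bY: "b \<in> Y" and zY: "z \<in> Y"
    and gam: "geodesic_seg Y \<gamma> b z" and t0: "0 \<le> t" and t1: "t \<le> 1"
  shows "fsum V w g (\<gamma> (t * dist b z)) \<le> (1-t) * fsum V w g b + t * fsum V w g z
          - t*(1-t)*(sum w V)*(dist b z)\<^sup>2"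
proof -
  have "fsum V w g (\<gamma> (t * dist b z)) \<le>
     (\<Sum>c\<in>V. w c * ((1-t)*(dist (g c) b)\<^sup>2 + t*(dist (g c) z)\<^sup>2 - t*(1-t)*(dist b z)\<^sup>2))"
    unfolding fsum_def
  proof (rule sum_mono)
    fix c assume c: "c \<in> V"
    have "(dist (g c) (\<gamma> (t * dist b z)))\<^sup>2 \<le> (1-t)*(dist (g c) b)\<^sup>2 + t*(dist (g c) z)\<^sup>2 - t*(1-t)*(dist b z)\<^sup>2"
      using cat0_convex[OF cat geo _ bY zY gam t0 t1, of "g c"] c gY by blast
    then show "w c * (dist (g c) (\<gamma> (t * dist b z)))\<^sup>2 \<le> w c * ((1-t)*(dist (g c) b)\<^sup>2 + t*(dist (g c) z)\<^sup>2 - t*(1-t)*(dist b z)\<^sup>2)"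
      using w[OF c] by (rule mult_left_mono)
  qed
  also have "\<dots> = (1-t) * fsum V w g b + t * fsum V w g z - t*(1-t)*(sum w V)*(dist b z)\<^sup>2"
    unfolding fsum_def
    by (simp add: algebra_simps sum.distrib sum_subtractf sum_distrib_left sum_distrib_right)
  finally show ?thesis .
qed

lemma exists_min:
  assumes Y: "complete_geodesic_CAT0 Y" and gY: "g ` V \<subseteq> Y"
    and w: "\<And>c. c \<in> V \<Longrightarrow> w c \<ge> 0" and W: "sum w V > 0"
  shows "\<exists>b\<in>Y. \<forall>z\<in>Y. fsum V w g b \<le> fsum V w g z"
proof -
  have ne: "Y \<noteq> {}" and cY: "complete Y" and geo: "geodesic_space Y" and cat: "CAT0 Y"
    using Y unfolding complete_geodesic_CAT0_def by auto
  define h where "h = fsum V w g"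
  define I where "I = Inf (h ` Y)"
  have bdd: "bdd_below (h ` Y)" unfolding h_def
    by (rule bdd_belowI2[where m=0]) (rule fsum_nonneg, rule w)
  have low: "\<And>z. z \<in> Y \<Longrightarrow> I \<le> h z" unfolding I_def using bdd by (simp add: cInf_lower)
  define ep :: "nat \<Rightarrow> real" where "ep = (\<lambda>n. inverse (real (Suc n)))"
  have "\<forall>n. \<exists>y. y \<in> Y \<and> h y < I + ep n"
  proof
    fix n
    have "Inf (h ` Y) < I + ep n" unfolding I_def ep_def by simp
    then obtain a where "a \<in> h ` Y" "a < I + ep n"
      using cInf_lessD[of "h ` Y"] ne by blast
    then show "\<exists>y. y \<in> Y \<and> h y < I + ep n" by blast
  qed
  then obtain y where y: "\<And>n. y n \<in> Y" "\<And>n. h (y n) < I + ep n"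
    by metis
  have key: "sum w V * (dist (y n) (y k))\<^sup>2 \<le> 2 * ep n + 2 * ep k" for n k
  proof -
    obtain \<gamma> where gam: "geodesic_seg Y \<gamma> (y n) (y k)" using geo y(1) unfolding geodesic_space_def by blast
    define mp where "mp = \<gamma> ((1/2) * dist (y n) (y k))"
    have mY: "mp \<in> Y" using geo_in[OF gam, of "1/2"] unfolding mp_def by simp
    have "h mp \<le> (1 - 1/2) * h (y n) + (1/2) * h (y k) - (1/2)*(1-1/2) * sum w V * (dist (y n) (y k))\<^sup>2"
      using fsum_convex[OF cat geo gY w y(1)[of n] y(1)[of k] gam, where t="1/2"] unfolding h_def mp_def by simp
    also have "\<dots> = h (y n) / 2 + h (y k) / 2 - sum w V * (dist (y n) (y k))\<^sup>2 / 4"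
      by (simp add: field_simps)
    finally have A: "h mp \<le> h (y n) / 2 + h (y k) / 2 - sum w V * (dist (y n) (y k))\<^sup>2 / 4" .
    have B: "I \<le> h mp" using low mY by blast
    show ?thesis using A B y(2)[of n] y(2)[of k] by linarith
  qed
  have cau: "Cauchy y"
    unfolding Cauchy_def
  proof (intro allI impI)
    fix e :: real assume e: "e > 0"
    obtain N :: nat where N: "4 / (sum w V * e\<^sup>2) < real N" using reals_Archimedean2 by blast
    have "\<forall>m\<ge>N. \<forall>n\<ge>N. dist (y m) (y n) < e"
    proof (intro allI impI)
      fix m n assume mN: "m \<ge> N" and nN: "n \<ge> N"
      have im: "ep m \<le> ep N" using mN unfolding ep_def by (simp add: field_simps)
      have inn: "ep n \<le> ep N" using nN unfolding ep_def by (simp add: field_simps)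
      have "sum w V * (dist (y m) (y n))\<^sup>2 \<le> 4 * ep N"
        using key[of m n] im inn by linarith
      hence "(dist (y m) (y n))\<^sup>2 \<le> 4 * ep N / sum w V" using W by (simp add: field_simps)
      also have "\<dots> = 4 / (sum w V * real (Suc N))" using W unfolding ep_def by (simp add: field_simps)
      also have "\<dots> < e\<^sup>2"
      proof -
        have We: "sum w V * e\<^sup>2 > 0" using W e by simp
        have "4 < real N * (sum w V * e\<^sup>2)" using N We by (simp add: pos_divide_less_eq)
        also have "\<dots> \<le> e\<^sup>2 * (sum w V * real (Suc N))" using We by (simp add: algebra_simps)
        finally have "4 < e\<^sup>2 * (sum w V * real (Suc N))" .
        moreover have "sum w V * real (Suc N) > 0" using W by simp
        ultimately show ?thesis by (simp add: pos_divide_less_eq)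
      qed
      finally have "(dist (y m) (y n))\<^sup>2 < e\<^sup>2" .
      then show "dist (y m) (y n) < e" using e by (smt (verit) power_mono zero_le_dist)
    qed
    then show "\<exists>M. \<forall>m\<ge>M. \<forall>n\<ge>M. dist (y m) (y n) < e" by blast
  qed
  obtain l where lY: "l \<in> Y" and lim: "y \<longlonglongrightarrow> l"
    using cY cau y(1) unfolding complete_def by blast
  have lim2: "(\<lambda>n. h (y n)) \<longlonglongrightarrow> h l"
    unfolding h_def fsum_def by (intro tendsto_intros lim)
  have lim3: "(\<lambda>n. I + ep n) \<longlonglongrightarrow> I + 0"
    unfolding ep_def by (intro tendsto_intros LIMSEQ_inverse_real_of_nat)
  have "h l \<le> I + 0"
    by (rule LIMSEQ_le[OF lim2 lim3]) (use y(2) less_imp_le in blast)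
  then show ?thesis using lY low unfolding h_def by force
qed

lemma variance_ineq:
  assumes Y: "complete_geodesic_CAT0 Y" and gY: "g ` V \<subseteq> Y"
    and w: "\<And>c. c \<in> V \<Longrightarrow> w c \<ge> 0"
    and bY: "b \<in> Y" and bmin: "\<forall>z\<in>Y. fsum V w g b \<le> fsum V w g z" and zY: "z \<in> Y"
  shows "fsum V w g b + sum w V * (dist b z)\<^sup>2 \<le> fsum V w g z"
proof (rule ccontr)
  assume neg: "\<not> ?thesis"
  have geo: "geodesic_space Y" and cat: "CAT0 Y"
    using Y unfolding complete_geodesic_CAT0_def by auto
  define K where "K = sum w V * (dist b z)\<^sup>2"
  have K0: "K \<ge> 0" unfolding K_def using w by (simp add: sum_nonneg)
  define \<delta> where "\<delta> = fsum V w g b + K - fsum V w g z"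
  have d0: "\<delta> > 0" using neg unfolding \<delta>_def K_def by simp
  define t where "t = min 1 (\<delta> / (2 * (K + 1)))"
  have t0: "t > 0" using d0 K0 unfolding t_def by simp
  have t1: "t \<le> 1" unfolding t_def by simp
  have tK: "t * K \<le> \<delta> / 2"
  proof -
    have "t * K \<le> (\<delta> / (2 * (K + 1))) * K" unfolding t_def using K0 by (intro mult_right_mono) auto
    also have "\<dots> = (\<delta> / 2) * (K / (K + 1))" using K0 by (simp add: field_simps)
    also have "\<dots> \<le> (\<delta> / 2) * 1" using K0 d0 by (intro mult_left_mono) auto
    finally show ?thesis by simp
  qed
  obtain \<gamma> where gam: "geodesic_seg Y \<gamma> b z" using geo bY zY unfolding geodesic_space_def by blast
  have pY: "\<gamma> (t * dist b z) \<in> Y" using geo_in[OF gam] t0 t1 by simp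
  have "fsum V w g b \<le> fsum V w g (\<gamma> (t * dist b z))" using bmin pY by blast
  also have "\<dots> \<le> (1-t) * fsum V w g b + t * fsum V w g z - t*(1-t)*(sum w V)*(dist b z)\<^sup>2"
    using fsum_convex[OF cat geo gY w bY zY gam] t0 t1 by simp
  finally have "t * fsum V w g b \<le> t * (fsum V w g z - (1-t) * K)"
    unfolding K_def by (simp add: algebra_simps)
  hence "fsum V w g b \<le> fsum V w g z - (1-t) * K" using t0 by simp
  hence "\<delta> \<le> t * K" unfolding \<delta>_def by (simp add: algebra_simps)
  then show False using tK d0 by linarith
qed

lemma bar_eq:
  assumes bY: "b \<in> Y" and W: "sum (vweight Ed ori ext mE) V > 0"
    and var: "\<forall>z\<in>Y. fsum V (vweight Ed ori ext mE) g b + sum (vweight Ed ori ext mE) V * (dist b z)\<^sup>2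
                  \<le> fsum V (vweight Ed ori ext mE) g z"
  shows "bar Y V Ed ori ext mE g = b"
  unfolding bar_def
proof (rule the_equality)
  have "\<forall>z\<in>Y. fsum V (vweight Ed ori ext mE) g b \<le> fsum V (vweight Ed ori ext mE) g z"
    using var W by (smt (verit) mult_nonneg_nonneg zero_le_power2)
  then show "b \<in> Y \<and> (\<forall>z\<in>Y. (\<Sum>c\<in>V. vweight Ed ori ext mE c * (dist (g c) b)\<^sup>2)
          \<le> (\<Sum>c\<in>V. vweight Ed ori ext mE c * (dist (g c) z)\<^sup>2))"
    using bY unfolding fsum_def by blast
next
  fix y assume y: "y \<in> Y \<and> (\<forall>z\<in>Y. (\<Sum>c\<in>V. vweight Ed ori ext mE c * (dist (g c) y)\<^sup>2)
          \<le> (\<Sum>c\<in>V. vweight Ed ori ext mE c * (dist (g c) z)\<^sup>2))"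
  then have "fsum V (vweight Ed ori ext mE) g y \<le> fsum V (vweight Ed ori ext mE) g b"
    using bY unfolding fsum_def by blast
  moreover have "fsum V (vweight Ed ori ext mE) g b + sum (vweight Ed ori ext mE) V * (dist b y)\<^sup>2
                  \<le> fsum V (vweight Ed ori ext mE) g y" using var y by blast
  ultimately have "sum (vweight Ed ori ext mE) V * (dist b y)\<^sup>2 \<le> 0" by linarith
  then have "(dist b y)\<^sup>2 \<le> 0" using W by (simp add: mult_le_0_iff)
  then show "y = b" by simp
qed

lemma double_sum:
  assumes fin: "finite V" and gY: "g ` V \<subseteq> Y"
    and var: "\<forall>z\<in>Y. fsum V w g b + sum w V * (dist b z)\<^sup>2 \<le> fsum V w g z"
    and w: "\<And>c. c \<in> V \<Longrightarrow> w c \<ge> 0"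
  shows "2 * sum w V * fsum V w g b \<le> (\<Sum>c\<in>V. \<Sum>c'\<in>V. w c * w c' * (dist (g c) (g c'))\<^sup>2)"
proof -
  have fb: "fsum V w g b = (\<Sum>c\<in>V. w c * (dist b (g c))\<^sup>2)" by (simp add: fsum_def dist_commute)
  have s1: "(\<Sum>c0\<in>V. w c0 * fsum V w g b) = sum w V * fsum V w g b"
    by (simp add: sum_distrib_right)
  have s2: "(\<Sum>c0\<in>V. w c0 * (sum w V * (dist b (g c0))\<^sup>2)) = sum w V * fsum V w g b"
    unfolding fb sum_distrib_left by (simp add: algebra_simps)
  have "2 * sum w V * fsum V w g b = (\<Sum>c0\<in>V. w c0 * (fsum V w g b + sum w V * (dist b (g c0))\<^sup>2))"
    unfolding distrib_left sum.distrib s1 s2 by simp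
  also have "\<dots> \<le> (\<Sum>c0\<in>V. w c0 * fsum V w g (g c0))"
    using var gY w by (intro sum_mono mult_left_mono) auto
  also have "\<dots> = (\<Sum>c\<in>V. \<Sum>c'\<in>V. w c * w c' * (dist (g c) (g c'))\<^sup>2)"
    unfolding fsum_def sum_distrib_left by (subst sum.swap) (simp add: algebra_simps)
  finally show ?thesis .
qed

lemma double_sum_eq:
  assumes fin: "finite V"
    and var: "\<forall>z. fsum V w g b + sum w V * (dist b z)\<^sup>2 = fsum V w g z"
  shows "2 * sum w V * fsum V w g b = (\<Sum>c\<in>V. \<Sum>c'\<in>V. w c * w c' * (dist (g c) (g c'))\<^sup>2)"
proof -
  have fb: "fsum V w g b = (\<Sum>c\<in>V. w c * (dist b (g c))\<^sup>2)" by (simp add: fsum_def dist_commute)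
  have s1: "(\<Sum>c0\<in>V. w c0 * fsum V w g b) = sum w V * fsum V w g b"
    by (simp add: sum_distrib_right)
  have s2: "(\<Sum>c0\<in>V. w c0 * (sum w V * (dist b (g c0))\<^sup>2)) = sum w V * fsum V w g b"
    unfolding fb sum_distrib_left by (simp add: algebra_simps)
  have "2 * sum w V * fsum V w g b = (\<Sum>c0\<in>V. w c0 * (fsum V w g b + sum w V * (dist b (g c0))\<^sup>2))"
    unfolding distrib_left sum.distrib s1 s2 by simp
  also have "\<dots> = (\<Sum>c0\<in>V. w c0 * fsum V w g (g c0))"
    using var by simp
  also have "\<dots> = (\<Sum>c\<in>V. \<Sum>c'\<in>V. w c * w c' * (dist (g c) (g c'))\<^sup>2)"
    unfolding fsum_def sum_distrib_left by (subst sum.swap) (simp add: algebra_simps)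
  finally show ?thesis .
qed

lemma eucl_var:
  fixes g :: "'v \<Rightarrow> 'n::real_inner"
  assumes W: "sum w V > 0"
  defines "b \<equiv> (1 / sum w V) *\<^sub>R (\<Sum>c\<in>V. w c *\<^sub>R g c)"
  shows "fsum V w g b + sum w V * (dist b z)\<^sup>2 = fsum V w g z"
proof -
  define S where "S = (\<Sum>c\<in>V. w c *\<^sub>R g c)"
  define A where "A = (\<Sum>c\<in>V. w c * (g c \<bullet> g c))"
  have fz: "fsum V w g x = A - 2 * (S \<bullet> x) + sum w V * (x \<bullet> x)" for x
  proof -
    have "fsum V w g x = (\<Sum>c\<in>V. w c * (g c \<bullet> g c) - 2 * (w c * (g c \<bullet> x)) + w c * (x \<bullet> x))"
      unfolding fsum_def dist_norm power2_norm_eq_inner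
      by (intro sum.cong) (simp_all add: inner_diff_left inner_diff_right inner_commute algebra_simps)
    also have "\<dots> = A - 2 * (\<Sum>c\<in>V. w c * (g c \<bullet> x)) + sum w V * (x \<bullet> x)"
      unfolding A_def by (simp add: sum.distrib sum_subtractf sum_distrib_left sum_distrib_right)
    also have "(\<Sum>c\<in>V. w c * (g c \<bullet> x)) = S \<bullet> x"
      unfolding S_def by (simp add: inner_sum_left)
    finally show ?thesis .
  qed
  have Sb: "S = sum w V *\<^sub>R b" unfolding b_def S_def using W by simp
  have "fsum V w g b + sum w V * (dist b z)\<^sup>2
      = A - 2 * (S \<bullet> b) + sum w V * (b \<bullet> b) + sum w V * ((b \<bullet> b) - 2 * (b \<bullet> z) + (z \<bullet> z))"
    unfolding fz dist_norm power2_norm_eq_inner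
    by (simp add: inner_diff_left inner_diff_right inner_commute)
  also have "\<dots> = A - 2 * (S \<bullet> z) + sum w V * (z \<bullet> z)"
    unfolding Sb by (simp add: algebra_simps)
  also have "\<dots> = fsum V w g z" by (simp add: fz)
  finally show ?thesis .
qed

lemma graph_facts:
  assumes "weighted_graph V Ed ori ext mE"
  shows "finite V" "V \<noteq> {}" "\<And>c. c \<in> V \<Longrightarrow> vweight Ed ori ext mE c > 0"
    "tweight V Ed ori ext mE = sum (vweight Ed ori ext mE) V"
    "sum (vweight Ed ori ext mE) V > 0"
proof -
  show f: "finite V" and n: "V \<noteq> {}" and p: "\<And>c. c \<in> V \<Longrightarrow> vweight Ed ori ext mE c > 0"
    using assms unfolding weighted_graph_def by auto
  show "tweight V Ed ori ext mE = sum (vweight Ed ori ext mE) V" by (simp add: tweight_def)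
  show "sum (vweight Ed ori ext mE) V > 0" using f n p by (simp add: sum_pos)
qed

lemma energy_nonneg: "(\<forall>e\<in>Ed. mE e > 0) \<Longrightarrow> energy Ed ori ext mE g \<ge> 0"
  unfolding energy_def by (intro sum_nonneg) (simp add: less_imp_le)

lemma Fgro_eq: "Fgro V Ed ori ext mE g =
   (\<Sum>c\<in>V. \<Sum>c'\<in>V. vweight Ed ori ext mE c * vweight Ed ori ext mE c' * (dist (g c) (g c'))\<^sup>2)
     / (2 * sum (vweight Ed ori ext mE) V)"
  unfolding Fgro_def tweight_def by simp

lemma RQ_le:
  assumes wg: "weighted_graph V Ed ori ext mE" and Y: "complete_geodesic_CAT0 Y"
    and nc: "nonconst_map Y V g"
  shows "RQgro V Ed ori ext mE g \<le> RQ Y V Ed ori ext mE g"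
proof -
  let ?w = "vweight Ed ori ext mE"
  note gf = graph_facts[OF wg]
  have w0: "\<And>c. c \<in> V \<Longrightarrow> ?w c \<ge> 0" using gf(3) less_imp_le by blast
  have gY: "g ` V \<subseteq> Y" and ncc: "\<exists>c\<in>V. \<exists>c'\<in>V. g c \<noteq> g c'" using nc unfolding nonconst_map_def by auto
  obtain b where bY: "b \<in> Y" and bmin: "\<forall>z\<in>Y. fsum V ?w g b \<le> fsum V ?w g z"
    using exists_min[OF Y gY w0 gf(5)] by blast
  have var: "\<forall>z\<in>Y. fsum V ?w g b + sum ?w V * (dist b z)\<^sup>2 \<le> fsum V ?w g z"
    using variance_ineq[OF Y gY w0 bY bmin] by blast
  have barb: "bar Y V Ed ori ext mE g = b" by (rule bar_eq[OF bY gf(5) var])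
  have RQe: "RQ Y V Ed ori ext mE g = energy Ed ori ext mE g / fsum V ?w g b"
    unfolding RQ_def barb fsum_def by simp
  obtain c0 where c0: "c0 \<in> V" "g c0 \<noteq> b" using ncc by metis
  have Dpos: "fsum V ?w g b > 0"
    unfolding fsum_def
    by (rule sum_pos2[OF gf(1) c0(1)]) (use c0 gf(3) w0 in auto)
  have ds: "2 * sum ?w V * fsum V ?w g b \<le> (\<Sum>c\<in>V. \<Sum>c'\<in>V. ?w c * ?w c' * (dist (g c) (g c'))\<^sup>2)"
    by (rule double_sum[OF gf(1) gY var w0])
  have DF: "fsum V ?w g b \<le> Fgro V Ed ori ext mE g"
    unfolding Fgro_eq using ds gf(5) by (simp add: field_simps)
  have E0: "energy Ed ori ext mE g \<ge> 0" using wg energy_nonneg unfolding weighted_graph_def by blast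
  have "RQgro V Ed ori ext mE g = energy Ed ori ext mE g / Fgro V Ed ori ext mE g" by (simp add: RQgro_def)
  also have "\<dots> \<le> energy Ed ori ext mE g / fsum V ?w g b"
    using DF Dpos E0 by (intro divide_left_mono) auto
  finally show ?thesis using RQe by simp
qed

lemma RQ_eq_eucl:
  assumes wg: "weighted_graph V Ed ori ext mE"
  shows "RQgro V Ed ori ext mE (g :: 'v \<Rightarrow> 'n::euclidean_space) = RQ (UNIV :: 'n set) V Ed ori ext mE g"
proof -
  let ?w = "vweight Ed ori ext mE"
  note gf = graph_facts[OF wg]
  define b where "b = (1 / sum ?w V) *\<^sub>R (\<Sum>c\<in>V. ?w c *\<^sub>R g c)"
  have var: "\<forall>z. fsum V ?w g b + sum ?w V * (dist b z)\<^sup>2 = fsum V ?w g z"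
    unfolding b_def using eucl_var[OF gf(5), of g] by blast
  have barb: "bar (UNIV :: 'n set) V Ed ori ext mE g = b"
    by (rule bar_eq) (use var gf(5) in auto)
  have RQe: "RQ (UNIV :: 'n set) V Ed ori ext mE g = energy Ed ori ext mE g / fsum V ?w g b"
    unfolding RQ_def barb fsum_def by simp
  have ds: "2 * sum ?w V * fsum V ?w g b = (\<Sum>c\<in>V. \<Sum>c'\<in>V. ?w c * ?w c' * (dist (g c) (g c'))\<^sup>2)"
    by (rule double_sum_eq[OF gf(1) var])
  have DF: "fsum V ?w g b = Fgro V Ed ori ext mE g"
    unfolding Fgro_eq using ds[symmetric] gf(5) by (simp add: field_simps)
  show ?thesis using RQe DF by (simp add: RQgro_def)
qed

theorem mainTheorem10:
  fixes V :: "'v set" and Ed :: "'e set" and ori ext :: "'e \<Rightarrow> 'v" and mE :: "'e \<Rightarrow> real"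
    and Y :: "'y::metric_space set"
  assumes "weighted_graph V Ed ori ext mE"
    and "complete_geodesic_CAT0 Y"
  shows "lambda_gro V Ed ori ext mE Y \<le> lambda_spec V Ed ori ext mE Y \<and>
         lambda_gro V Ed ori ext mE (UNIV :: 'n::euclidean_space set)
           = lambda_spec V Ed ori ext mE (UNIV :: 'n set)"
proof
  show "lambda_gro V Ed ori ext mE Y \<le> lambda_spec V Ed ori ext mE Y"
  proof (cases "\<exists>g. nonconst_map Y V g")
    case False
    then show ?thesis unfolding lambda_gro_def lambda_spec_def by simp
  next
    case True
    have E0: "\<And>g. energy Ed ori ext mE g \<ge> 0" using assms(1) energy_nonneg unfolding weighted_graph_def by blast
    have F0: "\<And>g. Fgro V Ed ori ext mE g \<ge> 0"
      unfolding Fgro_eq using graph_facts[OF assms(1)]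
      by (intro divide_nonneg_nonneg sum_nonneg mult_nonneg_nonneg) (auto intro: less_imp_le)
    show ?thesis unfolding lambda_gro_def lambda_spec_def
    proof (rule cInf_mono)
      show "{RQ Y V Ed ori ext mE g |g. nonconst_map Y V g} \<noteq> {}" using True by blast
      show "bdd_below {RQgro V Ed ori ext mE g |g. nonconst_map Y V g}"
        by (rule bdd_belowI[where m=0]) (use E0 F0 in \<open>auto simp: RQgro_def intro: divide_nonneg_nonneg\<close>)
      fix r assume "r \<in> {RQ Y V Ed ori ext mE g |g. nonconst_map Y V g}"
      then obtain g where "nonconst_map Y V g" "r = RQ Y V Ed ori ext mE g" by blast
      then show "\<exists>a\<in>{RQgro V Ed ori ext mE g |g. nonconst_map Y V g}. a \<le> r"
        using RQ_le[OF assms] by blast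
    qed
  qed
next
  show "lambda_gro V Ed ori ext mE (UNIV :: 'n::euclidean_space set)
           = lambda_spec V Ed ori ext mE (UNIV :: 'n set)"
  proof -
    have "\<And>g :: 'v \<Rightarrow> 'n. RQgro V Ed ori ext mE g = RQ (UNIV :: 'n set) V Ed ori ext mE g"
      by (rule RQ_eq_eucl[OF assms(1)])
    then have "{RQgro V Ed ori ext mE g |g :: 'v \<Rightarrow> 'n. nonconst_map (UNIV :: 'n set) V g}
       = {RQ (UNIV :: 'n set) V Ed ori ext mE g |g. nonconst_map (UNIV :: 'n set) V g}" by simp
    then show ?thesis unfolding lambda_gro_def lambda_spec_def by simp
  qed
qed

end
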